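(* Assume C1 and C3. Let $\overline{E_\lambda}=\sup_{(t,\theta)\in[0,T]\times\Theta}\|E_\theta(t)\|_2$. There exist constants $K_1,K_2,L_1>0$, not depending on $\theta,\theta',t$ or $\lambda$, such that for all $\theta,\theta'\in\Theta$ and $t\in[0,T]$, $$\|E_\theta(t)-E_{\theta'}(t)\|_2\le K_1\overline{E_\lambda}\,e^{L_1\overline{E_\lambda}/\lambda}\|\theta-\theta'\|,$$ and $\overline{E_\lambda}\le K_2e^{L_1/\lambda}$.
   Context: Setting: $T>0$, $C\in\mathbb{R}^{d'\times d}$, $\Theta\subset\mathbb{R}^p$, $\lambda>0$; for $\theta\in\Theta$, $A_\theta(t)\in\mathbb{R}^{d\times d}$. $E_\theta$ solves the Riccati equation $\dot E_\theta=C^TC-A_\theta^TE_\theta-E_\theta A_\theta-\frac1\lambda E_\theta^2$ with $E_\theta(0)=Q$ (symmetric, nonnegative). $\|\cdot\|_2$ is the Frobenius norm. C1: $\Theta$ compact. C3: $(t,\theta)\mapsto A_\theta(t)$ continuous on $[0,T]\times\Theta$ (and, as used, $\theta\mapsto A_\theta$ Lipschitz in $L^2$, e.g. under C4: $\partial A_\theta(t)/\partial\theta$ continuous in $(t,\theta)$). *)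

theory Defs
  imports "HOL-Analysis.Analysis"
begin

text \<open>Matrices are rendered as real^'n^'m; the norm on this type is the
Frobenius norm. E lam th t is the Riccati solution for parameter lam.\<close>

definition Ebar :: "(real \<Rightarrow> real^'p \<Rightarrow> real \<Rightarrow> real^'d^'d) \<Rightarrow> real \<Rightarrow> (real^'p) set \<Rightarrow> real \<Rightarrow> real" where
  "Ebar E T \<Theta> lam = (SUP p \<in> {0..T} \<times> \<Theta>. norm (E lam (snd p) (fst p)))"

end

theory Submission
  imports Defs
begin



lemma sqnorm_mat: "(norm (A::real^'n^'m))\<^sup>2 = (\<Sum>i\<in>UNIV. \<Sum>j\<in>UNIV. (A$i$j)\<^sup>2)"
  unfolding power2_norm_eq_inner by (simp add: inner_vec_def power2_eq_square)

lemma norm_transpose_eq: "norm (transpose (A::real^'n^'m)) = norm A"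
proof -
  have "(norm (transpose A))\<^sup>2 = (norm A)\<^sup>2"
    unfolding sqnorm_mat transpose_def by (subst sum.swap) simp
  then show ?thesis by (simp add: power2_eq_iff_nonneg)
qed

lemma norm_mv_le: "norm ((A::real^'n^'m) *v x) \<le> norm A * norm x"
proof -
  have "(norm (A *v x))\<^sup>2 = (\<Sum>i\<in>UNIV. ((A$i) \<bullet> x)\<^sup>2)"
    unfolding power2_norm_eq_inner by (simp add: inner_vec_def matrix_vector_mult_def power2_eq_square)
  also have "\<dots> \<le> (\<Sum>i\<in>UNIV. (norm (A$i))\<^sup>2 * (norm x)\<^sup>2)"
    by (intro sum_mono) (metis Cauchy_Schwarz_ineq2 power2_abs power_mono abs_ge_zero power_mult_distrib)
  also have "\<dots> = (norm A)\<^sup>2 * (norm x)\<^sup>2"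
    by (simp add: sum_distrib_right power2_norm_eq_inner inner_vec_def[of A A] )
  finally show ?thesis
    by (metis norm_ge_zero power_mult_distrib power2_le_imp_le mult_nonneg_nonneg)
qed

lemma norm_mm_le: "norm ((A::real^'k^'m) ** (B::real^'n^'k)) \<le> norm A * norm B"
proof -
  have row: "(A ** B)$i = transpose B *v (A$i)" for i
    by (simp add: vec_eq_iff matrix_matrix_mult_def matrix_vector_mult_def transpose_def mult.commute)
  have "(norm (A ** B))\<^sup>2 = (\<Sum>i\<in>UNIV. (norm ((A**B)$i))\<^sup>2)"
    by (simp add: power2_norm_eq_inner inner_vec_def)
  also have "\<dots> \<le> (\<Sum>i\<in>UNIV. (norm B)\<^sup>2 * (norm (A$i))\<^sup>2)"
    apply (intro sum_mono)
    unfolding row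
    by (metis norm_mv_le norm_transpose_eq norm_ge_zero power_mono power_mult_distrib)
  also have "\<dots> = (norm A)\<^sup>2 * (norm B)\<^sup>2"
    by (simp add: sum_distrib_left power2_norm_eq_inner inner_vec_def[of A A] mult.commute)
  finally show ?thesis
    by (metis norm_ge_zero power_mult_distrib power2_le_imp_le mult_nonneg_nonneg)
qed


lemma inner_transpose_mv: "(x::real^'n) \<bullet> (transpose (A::real^'n^'m) *v y) = (A *v x) \<bullet> y"
  by (metis dot_lmul_matrix inner_commute transpose_matrix_vector)

lemma scaleR_mv: "((c::real) *\<^sub>R (M::real^'n^'m)) *v x = c *\<^sub>R (M *v x)"
  by (simp add: vec_eq_iff matrix_vector_mult_def sum_distrib_left mult.assoc)

lemma quad_scale: "((c::real) *\<^sub>R y) \<bullet> ((M::real^'n^'n) *v (c *\<^sub>R y)) = c\<^sup>2 * (y \<bullet> (M *v y))"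
  by (simp add: matrix_vector_mult_scaleR power2_eq_square)

lemma bl_transpose: "bounded_linear (transpose :: real^'n^'m \<Rightarrow> real^'m^'n)"
  by (rule bounded_linearI') (simp_all add: transpose_def vec_eq_iff)

lemma bl_trace: "bounded_linear (trace :: real^'n^'n \<Rightarrow> real)"
  by (rule bounded_linearI') (simp_all add: trace_def sum.distrib sum_distrib_left)

lemma bl_quad: "bounded_linear (\<lambda>M::real^'n^'n. x \<bullet> (M *v x))"
  by (rule bounded_linearI') (simp_all add: matrix_vector_mult_add_rdistrib inner_add_right
      scaleR_mv)

lemma trace_tr_mult: "trace (transpose (X::real^'n^'m) ** Y) = X \<bullet> Y"
  by (simp add: trace_def matrix_matrix_mult_def transpose_def inner_vec_def)
     (subst sum.swap, simp)

lemma kernel_psd: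
  fixes M :: "real^'n^'n"
  assumes sym: "transpose M = M" and psd: "\<And>y. 0 \<le> y \<bullet> (M *v y)" and z: "x \<bullet> (M *v x) = 0"
  shows "M *v x = 0"
proof -
  define y where "y = M *v x"
  have yx: "y \<bullet> (M *v x) = y \<bullet> y" by (simp add: y_def)
  have xy: "x \<bullet> (M *v y) = y \<bullet> y"
    by (metis inner_transpose_mv sym y_def)
  have *: "0 \<le> - 2 * t * (y \<bullet> y) + t\<^sup>2 * (y \<bullet> (M *v y))" for t
  proof -
    have "0 \<le> (x - t *\<^sub>R y) \<bullet> (M *v (x - t *\<^sub>R y))" by (rule psd)
    also have "\<dots> = x \<bullet> (M *v x) - t * (x \<bullet> (M *v y)) - t * (y \<bullet> (M *v x)) + t\<^sup>2 * (y \<bullet> (M *v y))"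
      by (simp add: matrix_vector_mult_diff_distrib matrix_vector_mult_scaleR inner_diff_left
          inner_diff_right power2_eq_square algebra_simps)
    finally show ?thesis using z xy yx by simp
  qed
  show ?thesis
  proof (rule ccontr)
    assume "M *v x \<noteq> 0"
    then have yp: "y \<bullet> y > 0" by (simp add: y_def)
    define q where "q = y \<bullet> (M *v y)"
    have q: "q \<ge> 0" using psd q_def by auto
    define t where "t = (y \<bullet> y) / (q + 1)"
    have tp: "t > 0" using yp q by (simp add: t_def)
    have "0 \<le> - 2 * t * (y \<bullet> y) + t\<^sup>2 * q" using * q_def by simp
    moreover have "t * q < y \<bullet> y" unfolding t_def using yp q
      by (simp add: field_simps)
    then have "t\<^sup>2 * q < t * (y \<bullet> y)" using tp by (simp add: power2_eq_square mult.assoc)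
    moreover have "t * (y \<bullet> y) > 0" using tp yp by simp
    ultimately show False by linarith
  qed
qed

lemma psd_from_unit:
  fixes M :: "real^'n^'n"
  assumes "\<And>x. norm x = 1 \<Longrightarrow> 0 \<le> x \<bullet> (M *v x)"
  shows "0 \<le> y \<bullet> (M *v y)"
proof (cases "y = 0")
  case False
  then have n: "norm y > 0" by simp
  have "0 \<le> (inverse (norm y) *\<^sub>R y) \<bullet> (M *v (inverse (norm y) *\<^sub>R y))"
    by (rule assms) (use n in simp)
  also have "\<dots> = (y \<bullet> (M *v y)) / (norm y)\<^sup>2"
    unfolding quad_scale by (simp add: power2_eq_square divide_inverse)
  finally show ?thesis using n by (simp add: zero_le_divide_iff)
qed simp

lemma psd_entry:
  fixes M :: "real^'n^'n"
  assumes sym: "transpose M = M" and psd: "\<And>y. 0 \<le> y \<bullet> (M *v y)"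
  shows "(M$i$j)\<^sup>2 \<le> M$i$i * M$j$j" and "0 \<le> M$i$i"
proof -
  have ax: "axis a 1 \<bullet> (M *v axis b 1) = M$a$b" for a b
    by (metis cart_eq_inner_axis inner_commute matrix_vector_mult_basis column_def vec_lambda_beta)
  have mji: "M$j$i = M$i$j" using sym by (metis transpose_def vec_lambda_beta)
  have q: "0 \<le> s\<^sup>2 * M$i$i + 2 * s * r * M$i$j + r\<^sup>2 * M$j$j" for s r
  proof -
    have "0 \<le> (s *\<^sub>R axis i 1 + r *\<^sub>R axis j 1) \<bullet> (M *v (s *\<^sub>R axis i 1 + r *\<^sub>R axis j 1))"
      by (rule psd)
    also have "\<dots> = s\<^sup>2 * M$i$i + 2 * s * r * M$i$j + r\<^sup>2 * M$j$j"
      by (simp add: matrix_vector_right_distrib matrix_vector_mult_scaleR inner_add_left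
          inner_add_right ax mji power2_eq_square algebra_simps)
    finally show ?thesis .
  qed
  show ii: "0 \<le> M$i$i" using q[of 1 0] by simp
  show "(M$i$j)\<^sup>2 \<le> M$i$i * M$j$j"
  proof (cases "M$i$i = 0")
    case True
    show ?thesis
    proof (rule ccontr)
      assume "\<not> ?thesis"
      then have ne: "M$i$j \<noteq> 0" using True by auto
      have "0 \<le> 2 * (- (M$j$j + 1) / (2 * M$i$j)) * 1 * M$i$j + 1 * M$j$j"
        using q[of "- (M$j$j + 1) / (2 * M$i$j)" 1] True by simp
      then show False using ne by (simp add: field_simps)
    qed
  next
    case False
    then have p: "M$i$i > 0" using ii by simp
    have "0 \<le> (M$i$j)\<^sup>2 * M$i$i - 2 * (M$i$j)\<^sup>2 * M$i$i + (M$i$i)\<^sup>2 * M$j$j"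
      using q[of "- M$i$j" "M$i$i"] by (simp add: power2_eq_square algebra_simps)
    then have "0 \<le> M$i$i * (M$i$i * M$j$j - (M$i$j)\<^sup>2)" by (simp add: algebra_simps power2_eq_square)
    then show ?thesis using p by (simp add: zero_le_mult_iff)
  qed
qed

lemma norm_le_trace:
  fixes M :: "real^'n^'n"
  assumes sym: "transpose M = M" and psd: "\<And>y. 0 \<le> y \<bullet> (M *v y)"
  shows "norm M \<le> trace M"
proof -
  have "(norm M)\<^sup>2 = (\<Sum>i\<in>UNIV. \<Sum>j\<in>UNIV. (M$i$j)\<^sup>2)" by (rule sqnorm_mat)
  also have "\<dots> \<le> (\<Sum>i\<in>UNIV. \<Sum>j\<in>UNIV. M$i$i * M$j$j)"
    by (intro sum_mono psd_entry[OF sym psd])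
  also have "\<dots> = (trace M)\<^sup>2"
    by (simp add: trace_def power2_eq_square sum_product)
  finally have "(norm M)\<^sup>2 \<le> (trace M)\<^sup>2" .
  moreover have "0 \<le> trace M" unfolding trace_def by (intro sum_nonneg psd_entry[OF sym psd])
  ultimately show ?thesis using power2_le_imp_le by blast
qed




lemma deriv_norm_bound:
  fixes F :: "real \<Rightarrow> 'a::banach"
  assumes t: "0 \<le> t" "t \<le> T"
    and d: "\<And>s. s\<in>{0..T} \<Longrightarrow> (F has_vector_derivative F' s) (at s within {0..T})"
    and g: "continuous_on {0..T} g" and b: "\<And>s. s\<in>{0..T} \<Longrightarrow> norm (F' s) \<le> g s"
  shows "norm (F t - F 0) \<le> integral {0..t} g"
proof -
  have sub: "{0..t} \<subseteq> {0..T}" using t by auto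
  have "(F' has_integral (F t - F 0)) {0..t}"
    apply (rule fundamental_theorem_of_calculus[OF t(1)])
    using d sub by (meson has_vector_derivative_within_subset subsetD)
  moreover have "g integrable_on {0..t}"
    using continuous_on_subset[OF g sub] integrable_continuous_interval by blast
  ultimately have "norm (integral {0..t} F') \<le> integral {0..t} g"
    by (intro integral_norm_bound_integral) (use b t in \<open>auto simp: has_integral_integrable_integral\<close>)
  moreover have "integral {0..t} F' = F t - F 0"
    using \<open>(F' has_integral (F t - F 0)) {0..t}\<close> by (rule integral_unique)
  ultimately show ?thesis by simp
qed

lemma gronwall:
  fixes u :: "real \<Rightarrow> real"
  assumes u: "continuous_on {0..T} u" and k: "0 \<le> k" and c: "0 \<le> c"
    and ineq: "\<And>t. t \<in> {0..T} \<Longrightarrow> u t \<le> c + k * integral {0..t} u"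
    and t: "t \<in> {0..T}"
  shows "u t \<le> c * exp (k * T)"
proof -
  define w where "w s = c + k * integral {0..s} u" for s
  define ph where "ph s = exp (-k * s) * w s" for s
  have dw: "(w has_real_derivative k * u s) (at s within {0..T})" if "s \<in> {0..T}" for s
    unfolding w_def has_real_derivative_iff_has_vector_derivative
    using integral_has_vector_derivative[OF u that]
    by (auto intro!: derivative_eq_intros)
  have dphi: "(ph has_vector_derivative (exp (-k * s) * (k * u s) - k * exp (-k * s) * w s)) (at s within {0..T})"
    if "s \<in> {0..T}" for s
    unfolding ph_def has_real_derivative_iff_has_vector_derivative[symmetric]
    using dw[OF that] by (auto intro!: derivative_eq_intros simp: algebra_simps)
  have tt: "0 \<le> t" "t \<le> T" using t by auto
  have "((\<lambda>s. exp (-k * s) * (k * u s) - k * exp (-k * s) * w s) has_integral (ph t - ph 0)) {0..t}"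
    apply (rule fundamental_theorem_of_calculus[OF tt(1)])
    using dphi tt by (meson atLeastAtMost_iff has_vector_derivative_within_subset order_trans subsetI)
  moreover have "((\<lambda>s. 0::real) has_integral 0) {0..t}" by simp
  moreover have "exp (-k * s) * (k * u s) - k * exp (-k * s) * w s \<le> 0" if "s \<in> {0..t}" for s
  proof -
    have "u s \<le> w s" unfolding w_def using ineq that tt by auto
    then have "k * u s \<le> k * w s" using k by (rule mult_left_mono)
    then have "exp (-k * s) * (k * u s) \<le> exp (-k * s) * (k * w s)" by (rule mult_left_mono) auto
    then show ?thesis by (simp add: algebra_simps)
  qed
  ultimately have "ph t - ph 0 \<le> 0" by (rule has_integral_le)
  then have "exp (-k * t) * w t \<le> c" by (simp add: ph_def w_def)
  then have "w t \<le> c * exp (k * t)"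
    by (simp add: exp_minus field_simps)
  also have "\<dots> \<le> c * exp (k * T)" using k c tt by (simp add: mult_left_mono)
  finally show ?thesis using ineq[OF t] w_def by simp
qed




lemma sym_identity:
  fixes Cm A e :: "real^'d^'d"
  assumes "transpose Cm = Cm"
  shows "(Cm - transpose A ** e - e ** A - r *\<^sub>R (e ** e)) - transpose (Cm - transpose A ** e - e ** A - r *\<^sub>R (e ** e))
    = - (transpose A ** (e - transpose e)) - (e - transpose e) ** A - r *\<^sub>R (e ** (e - transpose e) + (e - transpose e) ** transpose e)"
proof -
  have c: "Cm $ j $ i = Cm $ i $ j" for i j using assms by (metis transpose_def vec_lambda_beta)
  show ?thesis
    by (simp add: vec_eq_iff matrix_matrix_mult_def transpose_def sum_subtractf sum.distrib
       algebra_simps c sum_distrib_left)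
qed

lemma norm4:
  fixes P R S U :: "'a::real_normed_vector"
  assumes "c \<ge> 0"
  shows "norm (- P - R - c *\<^sub>R (S + U)) \<le> norm P + norm R + c * (norm S + norm U)"
proof -
  have "norm (- P - R - c *\<^sub>R (S + U)) \<le> norm (- P - R) + norm (c *\<^sub>R (S + U))"
    by (rule norm_triangle_ineq4)
  also have "norm (- P - R) \<le> norm P + norm R"
    by (metis norm_minus_cancel norm_triangle_ineq4)
  also have "norm (c *\<^sub>R (S + U)) \<le> c * (norm S + norm U)"
    using assms by (simp add: mult_left_mono norm_triangle_ineq)
  finally show ?thesis by simp
qed

locale ric =
  fixes T lam a :: real and A e :: "real \<Rightarrow> real^'d^'d" and C :: "real^'d^'m" and Q :: "real^'d^'d"
  assumes T: "T > 0" and lam: "lam > 0" and a: "a \<ge> 0"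
    and Abd: "\<And>t. t \<in> {0..T} \<Longrightarrow> norm (A t) \<le> a"
    and e0: "e 0 = Q" and Q_sym: "transpose Q = Q" and Q_nonneg: "\<And>x. 0 \<le> x \<bullet> (Q *v x)"
    and de: "\<And>t. t \<in> {0..T} \<Longrightarrow> (e has_vector_derivative
           (transpose C ** C - transpose (A t) ** e t - e t ** A t
            - (1 / lam) *\<^sub>R (e t ** e t))) (at t within {0..T})"
begin

definition e' where "e' t = transpose C ** C - transpose (A t) ** e t - e t ** A t - (1 / lam) *\<^sub>R (e t ** e t)"

lemma de': "t \<in> {0..T} \<Longrightarrow> (e has_vector_derivative e' t) (at t within {0..T})"
  unfolding e'_def by (rule de)

lemma econt: "continuous_on {0..T} e"
  using de' by (rule continuous_on_vector_derivative)

lemma ebound: "\<exists>M\<ge>0. \<forall>t\<in>{0..T}. norm (e t) \<le> M"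
proof -
  have "compact (e ` {0..T})" using econt compact_continuous_image by blast
  then obtain M where "M > 0" "\<forall>x\<in>e ` {0..T}. norm x \<le> M"
    using compact_imp_bounded bounded_pos by metis
  then show ?thesis by (intro exI[of _ M]) auto
qed

lemma esym: "t \<in> {0..T} \<Longrightarrow> transpose (e t) = e t"
proof -
  assume t: "t \<in> {0..T}"
  obtain M where M: "M \<ge> 0" "\<And>t. t\<in>{0..T} \<Longrightarrow> norm (e t) \<le> M" using ebound by auto
  define D where "D s = e s - transpose (e s)" for s
  define k where "k = 2 * a + 2 * M / lam"
  have k: "k \<ge> 0" using a M lam by (simp add: k_def)
  have dD: "(D has_vector_derivative (e' s - transpose (e' s))) (at s within {0..T})" if "s \<in> {0..T}" for s
    unfolding D_def
    by (intro has_vector_derivative_diff de'[OF that]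
        bounded_linear.has_vector_derivative[OF bl_transpose])
  have Dc: "continuous_on {0..T} (\<lambda>s. norm (D s))"
    unfolding D_def
    by (intro continuous_on_norm continuous_on_diff econt
        linear_continuous_on_compose[OF econt bounded_linear.linear[OF bl_transpose]])
  have bd: "norm (e' s - transpose (e' s)) \<le> k * norm (D s)" if s: "s \<in> {0..T}" for s
  proof -
    have id: "e' s - transpose (e' s) = - (transpose (A s) ** D s) - D s ** A s
         - (1/lam) *\<^sub>R (e s ** D s + D s ** transpose (e s))"
      unfolding e'_def D_def by (rule sym_identity) (simp add: matrix_transpose_mul)
    have "norm (e' s - transpose (e' s)) \<le> norm (transpose (A s) ** D s) + norm (D s ** A s)
        + (1/lam) * (norm (e s ** D s) + norm (D s ** transpose (e s)))"
      unfolding id using lam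
      by (smt (verit) norm_minus_cancel norm_scaleR norm_triangle_ineq norm_triangle_ineq4 abs_of_pos
          divide_pos_pos mult_left_mono zero_less_one)
    also have "\<dots> \<le> a * norm (D s) + norm (D s) * a + (1/lam) * (M * norm (D s) + norm (D s) * M)"
    proof -
      have "norm (transpose (A s) ** D s) \<le> a * norm (D s)"
      proof -
        have "norm (transpose (A s) ** D s) \<le> norm (transpose (A s)) * norm (D s)" by (rule norm_mm_le)
        also have "\<dots> \<le> a * norm (D s)" using Abd[OF s] by (simp add: norm_transpose_eq mult_right_mono mult_left_mono)
        finally show ?thesis .
      qed
      moreover have "norm (D s ** A s) \<le> norm (D s) * a"
      proof -
        have "norm (D s ** A s) \<le> norm (D s) * norm (A s)" by (rule norm_mm_le)
        also have "\<dots> \<le> norm (D s) * a" using Abd[OF s] by (simp add: norm_transpose_eq mult_right_mono mult_left_mono)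
        finally show ?thesis .
      qed
      moreover have "norm (e s ** D s) \<le> M * norm (D s)"
      proof -
        have "norm (e s ** D s) \<le> norm (e s) * norm (D s)" by (rule norm_mm_le)
        also have "\<dots> \<le> M * norm (D s)" using M(2)[OF s] by (simp add: norm_transpose_eq mult_right_mono mult_left_mono)
        finally show ?thesis .
      qed
      moreover have "norm (D s ** transpose (e s)) \<le> norm (D s) * M"
      proof -
        have "norm (D s ** transpose (e s)) \<le> norm (D s) * norm (transpose (e s))" by (rule norm_mm_le)
        also have "\<dots> \<le> norm (D s) * M" using M(2)[OF s] by (simp add: norm_transpose_eq mult_right_mono mult_left_mono)
        finally show ?thesis .
      qed
      ultimately show ?thesis using lam
        by (intro add_mono mult_left_mono) auto
    qed
    also have "\<dots> = k * norm (D s)" by (simp add: k_def algebra_simps)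
    finally show ?thesis .
  qed
  have ineq: "norm (D s) \<le> 0 + k * integral {0..s} (\<lambda>s. norm (D s))" if s: "s \<in> {0..T}" for s
  proof -
    have "D 0 = 0" by (simp add: D_def e0 Q_sym)
    then have "norm (D s) = norm (D s - D 0)" by simp
    also have "\<dots> \<le> integral {0..s} (\<lambda>s. k * norm (D s))"
      using s by (intro deriv_norm_bound[where T=T and F'="\<lambda>s. e' s - transpose (e' s)"] dD bd
          continuous_on_mult continuous_on_const Dc) auto
    also have "\<dots> = k * integral {0..s} (\<lambda>s. norm (D s))" by simp
    finally show ?thesis by simp
  qed
  have "norm (D t) \<le> 0 * exp (k * T)"
    by (rule gronwall[OF Dc k order_refl ineq t])
  then show ?thesis by (simp add: D_def)
qed

end



lemma bb_mv: "bounded_bilinear (\<lambda>(M::real^'n^'m) x. M *v x)"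
proof
  show "\<exists>K. \<forall>a b. norm ((a::real^'n^'m) *v b) \<le> norm a * norm b * K"
    by (rule exI[of _ 1]) (simp add: norm_mv_le)
qed (simp_all add: matrix_vector_mult_add_rdistrib matrix_vector_right_distrib scaleR_mv
       matrix_vector_mult_scaleR)

lemma transpose_shift: "transpose (E + c *\<^sub>R mat 1 :: real^'n^'n) = transpose E + c *\<^sub>R mat 1"
  by (simp add: transpose_def vec_eq_iff mat_def)

context ric begin

definition k0 where "k0 = 2 * a + 2"

lemma epsd_strict:
  assumes eps: "\<epsilon> > 0" "\<epsilon> * exp (k0 * T) < lam"
  shows "\<forall>t\<in>{0..T}. \<forall>x. norm x = 1 \<longrightarrow> 0 < x \<bullet> (e t *v x) + \<epsilon> * exp (k0 * t)"
proof (rule ccontr)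
  assume neg: "\<not> ?thesis"
  define g where "g p = snd p \<bullet> (e (fst p) *v snd p) + \<epsilon> * exp (k0 * fst p)" for p :: "real \<times> (real^'d)"
  define K where "K = {0..T} \<times> sphere (0::real^'d) 1"
  define P where "P = K \<inter> g -` {..0}"
  have cK: "compact K" unfolding K_def by (intro compact_Times compact_Icc compact_sphere)
  have ecf: "continuous_on K (\<lambda>p. e (fst p))"
    by (rule continuous_on_compose2[OF econt continuous_on_fst]) (auto simp: K_def)
  have gc: "continuous_on K g"
    unfolding g_def
    by (intro continuous_intros bounded_bilinear.continuous_on[OF bb_mv] ecf)
  have cP: "compact P"
  proof -
    have "closed P" unfolding P_def
      by (rule continuous_closed_preimage[OF gc compact_imp_closed[OF cK] closed_atMost])
    moreover have "bounded P" using compact_imp_bounded[OF cK] by (rule bounded_subset) (auto simp: P_def)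
    ultimately show ?thesis by (simp add: compact_eq_bounded_closed)
  qed
  have "P \<noteq> {}"
  proof -
    from neg obtain t x where "t \<in> {0..T}" "norm x = 1" "\<not> 0 < x \<bullet> (e t *v x) + \<epsilon> * exp (k0 * t)"
      by blast
    then have "(t, x) \<in> P" by (auto simp: P_def K_def g_def)
    then show ?thesis by blast
  qed
  then obtain p0 where p0: "p0 \<in> P" and pmin: "\<And>q. q \<in> P \<Longrightarrow> fst p0 \<le> fst q"
    using continuous_attains_inf[OF cP _ continuous_on_fst[OF continuous_on_id]] by auto
  define t0 where "t0 = fst p0"
  define x0 where "x0 = snd p0"
  have t0: "t0 \<in> {0..T}" and x0: "norm x0 = 1" and gp0: "g (t0, x0) \<le> 0"
    using p0 by (auto simp: P_def K_def t0_def x0_def)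
  have before: "g (s, y) > 0" if "s \<in> {0..T}" "s < t0" "norm y = 1" for s y
  proof (rule ccontr)
    assume "\<not> g (s, y) > 0"
    then have "(s, y) \<in> P" using that by (auto simp: P_def K_def)
    then show False using pmin[of "(s, y)"] that by (simp add: t0_def)
  qed
  have t0pos: "t0 > 0"
  proof (rule ccontr)
    assume "\<not> t0 > 0"
    then have "t0 = 0" using t0 by auto
    then have "g (t0, x0) = x0 \<bullet> (Q *v x0) + \<epsilon>" by (simp add: g_def e0)
    also have "\<dots> > 0" using Q_nonneg[of x0] eps by simp
    finally show False using gp0 by simp
  qed
  have after: "g (t0, y) \<ge> 0" if y: "norm y = 1" for y
  proof -
    have cl: "closure {0..<t0} = {0..t0}" using t0pos by simp
    have "continuous_on {0..t0} (\<lambda>s. g (s, y))"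
    proof -
      have "continuous_on {0..t0} e" using t0 by (intro continuous_on_subset[OF econt]) auto
      then show ?thesis unfolding g_def
        by (intro continuous_intros bounded_bilinear.continuous_on[OF bb_mv]) auto
    qed
    then show ?thesis
      by (rule continuous_ge_on_closure[where S="{0..<t0}", unfolded cl]) (use t0pos t0 y in \<open>auto intro!: less_imp_le before\<close>)
  qed
  define \<mu> where "\<mu> = \<epsilon> * exp (k0 * t0)"
  have mupos: "\<mu> > 0" using eps by (simp add: \<mu>_def)
  have mulam: "\<mu> < lam"
  proof -
    have "\<mu> \<le> \<epsilon> * exp (k0 * T)" unfolding \<mu>_def using eps t0 a
      by (intro mult_left_mono) (auto simp: k0_def)
    then show ?thesis using eps by simp
  qed
  define Mm where "Mm = e t0 + \<mu> *\<^sub>R mat 1"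
  have Mq: "y \<bullet> (Mm *v y) = y \<bullet> (e t0 *v y) + \<mu> * (y \<bullet> y)" for y
    by (simp add: Mm_def matrix_vector_mult_add_rdistrib scaleR_mv inner_add_right)
  have Msym: "transpose Mm = Mm" unfolding Mm_def transpose_shift using esym[OF t0] by simp
  have Mpsd: "0 \<le> y \<bullet> (Mm *v y)" for y
  proof (rule psd_from_unit)
    fix x :: "real^'d" assume "norm x = 1"
    then show "0 \<le> x \<bullet> (Mm *v x)" using after[of x] unfolding Mq
      by (simp add: g_def \<mu>_def power2_norm_eq_inner[symmetric])
  qed
  have Mx0: "x0 \<bullet> (Mm *v x0) = 0" using after[OF x0] gp0 x0 unfolding Mq
    by (simp add: g_def \<mu>_def power2_norm_eq_inner[symmetric])
  have ex0: "e t0 *v x0 = - \<mu> *\<^sub>R x0"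
  proof -
    have "Mm *v x0 = 0" by (rule kernel_psd[OF Msym Mpsd Mx0])
    then show ?thesis by (simp add: Mm_def matrix_vector_mult_add_rdistrib scaleR_mv eq_neg_iff_add_eq_0)
  qed
  define f where "f s = x0 \<bullet> (e s *v x0) + \<epsilon> * exp (k0 * s)" for s
  define f' where "f' = x0 \<bullet> (e' t0 *v x0) + \<epsilon> * (k0 * exp (k0 * t0))"
  have df: "(f has_real_derivative f') (at t0 within {0..T})"
    unfolding has_real_derivative_iff_has_vector_derivative f_def f'_def
    by (intro has_vector_derivative_add bounded_linear.has_vector_derivative[OF bl_quad de'[OF t0]]
         has_real_derivative_iff_has_vector_derivative[THEN iffD1] derivative_eq_intros) auto
  have f'pos: "f' > 0"
  proof -
    have ee: "e t0 *v (e t0 *v x0) = \<mu>\<^sup>2 *\<^sub>R x0"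
    proof -
      have "e t0 *v (e t0 *v x0) = e t0 *v ((- \<mu>) *\<^sub>R x0)" using ex0 by simp
      also have "\<dots> = (- \<mu>) *\<^sub>R (e t0 *v x0)" by (rule matrix_vector_mult_scaleR)
      also have "\<dots> = \<mu>\<^sup>2 *\<^sub>R x0" using ex0 by (simp add: power2_eq_square)
      finally show ?thesis .
    qed
    have es: "x0 \<bullet> (e t0 *v v) = - \<mu> * (x0 \<bullet> v)" for v
      by (metis esym[OF t0] ex0 inner_transpose_mv inner_scaleR_left inner_commute)
    have x0x0: "x0 \<bullet> x0 = 1" using x0 by (simp add: power2_norm_eq_inner[symmetric])
    have "x0 \<bullet> (e' t0 *v x0) = (C *v x0) \<bullet> (C *v x0) - (A t0 *v x0) \<bullet> (e t0 *v x0)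
         - x0 \<bullet> (e t0 *v (A t0 *v x0)) - (1/lam) * (x0 \<bullet> (e t0 *v (e t0 *v x0)))"
      unfolding e'_def
      by (simp add: matrix_vector_mult_diff_rdistrib scaleR_mv inner_diff_right
          matrix_vector_mul_assoc[symmetric] inner_transpose_mv del: transpose_matrix_vector)
    also have "\<dots> = (C *v x0) \<bullet> (C *v x0) + 2 * \<mu> * (x0 \<bullet> (A t0 *v x0)) - \<mu>\<^sup>2 / lam"
      unfolding es ee ex0 using x0x0 by (simp add: inner_commute algebra_simps power2_eq_square)
    finally have f'eq: "f' = (C *v x0) \<bullet> (C *v x0) + 2 * \<mu> * (x0 \<bullet> (A t0 *v x0)) - \<mu>\<^sup>2 / lam + k0 * \<mu>"
      by (simp add: f'_def \<mu>_def)
    have "\<bar>x0 \<bullet> (A t0 *v x0)\<bar> \<le> a"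
    proof -
      have "\<bar>x0 \<bullet> (A t0 *v x0)\<bar> \<le> norm x0 * norm (A t0 *v x0)" by (rule Cauchy_Schwarz_ineq2)
      also have "\<dots> \<le> norm (A t0)" using norm_mv_le[of "A t0" x0] x0 by simp
      also have "\<dots> \<le> a" using Abd[OF t0] .
      finally show ?thesis .
    qed
    then have "- a \<le> x0 \<bullet> (A t0 *v x0)" by (simp add: abs_le_iff)
    then have "2 * \<mu> * (- a) \<le> 2 * \<mu> * (x0 \<bullet> (A t0 *v x0))"
      by (rule mult_left_mono) (use mupos in simp)
    then have "2 * \<mu> * (x0 \<bullet> (A t0 *v x0)) \<ge> - 2 * \<mu> * a" by simp
    moreover have "\<mu>\<^sup>2 / lam < \<mu>" using mupos mulam lam by (simp add: power2_eq_square field_simps)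
    moreover have "(C *v x0) \<bullet> (C *v x0) \<ge> 0" by simp
    moreover have "k0 * \<mu> = 2 * \<mu> * a + 2 * \<mu>" by (simp add: k0_def algebra_simps)
    ultimately show ?thesis unfolding f'eq using mupos by linarith
  qed
  obtain d where d: "d > 0" "\<And>h. h > 0 \<Longrightarrow> t0 - h \<in> {0..T} \<Longrightarrow> h < d \<Longrightarrow> f (t0 - h) < f t0"
    using has_real_derivative_pos_inc_left[OF df f'pos] by blast
  define h where "h = min (d/2) t0"
  have h: "h > 0" "h < d" "t0 - h \<in> {0..T}" "t0 - h < t0" using d t0pos t0 by (auto simp: h_def)
  have "f t0 = 0" using Mx0 unfolding Mq f_def by (simp add: \<mu>_def power2_norm_eq_inner[symmetric] x0)
  then have "f (t0 - h) < 0" using d(2)[OF h(1) h(3) h(2)] by simp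
  moreover have "f (t0 - h) > 0" using before[OF h(3) h(4) x0] by (simp add: f_def g_def)
  ultimately show False by simp
qed

lemma epsd: "t \<in> {0..T} \<Longrightarrow> 0 \<le> x \<bullet> (e t *v x)"
proof -
  assume t: "t \<in> {0..T}"
  show ?thesis
  proof (rule psd_from_unit)
    fix x :: "real^'d" assume x: "norm x = 1"
    show "0 \<le> x \<bullet> (e t *v x)"
    proof (rule ccontr)
      assume neg: "\<not> ?thesis"
      define v where "v = x \<bullet> (e t *v x)"
      have v: "v < 0" using neg v_def by simp
      define X where "X = exp (k0 * T)"
      have X: "X > 0" by (simp add: X_def)
      define \<epsilon> where "\<epsilon> = min (lam / (2 * X)) (- v / (2 * X))"
      have ep: "\<epsilon> > 0" using X v lam by (simp add: \<epsilon>_def divide_neg_pos)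
      have "\<epsilon> * X \<le> lam / 2" using X by (simp add: \<epsilon>_def min_def field_simps)
      then have el: "\<epsilon> * exp (k0 * T) < lam" using lam by (simp add: X_def)
      have ev: "\<epsilon> * X \<le> - v / 2" using X by (simp add: \<epsilon>_def min_def field_simps)
      have "exp (k0 * t) \<le> X" unfolding X_def using t a by (auto simp: k0_def intro!: mult_left_mono)
      then have "\<epsilon> * exp (k0 * t) \<le> \<epsilon> * X" using ep by (simp add: mult_left_mono)
      moreover have "0 < v + \<epsilon> * exp (k0 * t)" using epsd_strict[OF ep el] t x v_def by auto
      ultimately show False using ev v by linarith
    qed
  qed
qed

end



lemma trace_scaleR: "trace ((c::real) *\<^sub>R (X::real^'n^'n)) = c * trace X"
  by (simp add: trace_def sum_distrib_left)

context ric begin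

definition Bd where "Bd = (trace Q + (norm C)\<^sup>2 * T) * exp (2 * a * T)"

lemma ebound_uniform: "t \<in> {0..T} \<Longrightarrow> norm (e t) \<le> Bd"
proof -
  assume t: "t \<in> {0..T}"
  define tau where "tau s = trace (e s)" for s
  have nt: "norm (e s) \<le> tau s" if "s \<in> {0..T}" for s
    unfolding tau_def by (rule norm_le_trace[OF esym[OF that] epsd[OF that]])
  have tc: "continuous_on {0..T} tau"
    unfolding tau_def by (rule linear_continuous_on_compose[OF econt bounded_linear.linear[OF bl_trace]])
  have dtau: "(tau has_vector_derivative trace (e' s)) (at s within {0..T})" if "s \<in> {0..T}" for s
    unfolding tau_def by (rule bounded_linear.has_vector_derivative[OF bl_trace de'[OF that]])
  have te': "trace (e' s) \<le> (norm C)\<^sup>2 + 2 * a * tau s" if s: "s \<in> {0..T}" for s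
  proof -
    have eq: "trace (e' s) = C \<bullet> C - A s \<bullet> e s - transpose (A s) \<bullet> e s - (1/lam) * (e s \<bullet> e s)"
    proof -
      have "trace (e s ** A s) = transpose (A s) \<bullet> e s"
        by (metis trace_mul_sym trace_tr_mult transpose_transpose)
      moreover have "trace (e s ** e s) = e s \<bullet> e s"
        by (metis esym[OF s] trace_tr_mult)
      ultimately show ?thesis
        unfolding e'_def by (simp add: trace_sub trace_scaleR trace_tr_mult)
    qed
    have "- (A s \<bullet> e s) \<le> a * norm (e s)"
      using order_trans[OF Cauchy_Schwarz_ineq2[of "A s" "e s"] mult_right_mono[OF Abd[OF s] norm_ge_zero]]
      by simp
    moreover have "- (transpose (A s) \<bullet> e s) \<le> a * norm (e s)"
      using order_trans[OF Cauchy_Schwarz_ineq2[of "transpose (A s)" "e s", unfolded norm_transpose_eq] mult_right_mono[OF Abd[OF s] norm_ge_zero]]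
      by (simp add: norm_transpose_eq)
    moreover have "0 \<le> (1/lam) * (e s \<bullet> e s)" using lam by simp
    moreover have "a * norm (e s) \<le> a * tau s" using nt[OF s] a by (rule mult_left_mono)
    moreover have "C \<bullet> C = (norm C)\<^sup>2" by (simp add: power2_norm_eq_inner)
    ultimately show ?thesis unfolding eq by linarith
  qed
  have trQ: "0 \<le> trace Q" using norm_le_trace[OF Q_sym Q_nonneg] norm_ge_zero order_trans by blast
  have ineq: "tau s \<le> (trace Q + (norm C)\<^sup>2 * T) + (2 * a) * integral {0..s} tau" if s: "s \<in> {0..T}" for s
  proof -
    have sub: "{0..s} \<subseteq> {0..T}" using s by auto
    have I1: "((\<lambda>s. trace (e' s)) has_integral (tau s - tau 0)) {0..s}"
      apply (rule fundamental_theorem_of_calculus)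
      using s apply simp
      using dtau sub by (meson has_vector_derivative_within_subset subsetD)
    have ti: "tau integrable_on {0..s}"
      using continuous_on_subset[OF tc sub] integrable_continuous_interval by blast
    have I2: "((\<lambda>r. (norm C)\<^sup>2 + 2 * a * tau r) has_integral
        (measure lborel {0..s} *\<^sub>R (norm C)\<^sup>2 + 2 * a * integral {0..s} tau)) {0..s}"
      by (intro has_integral_add has_integral_const_real has_integral_mult_right integrable_integral ti)
    have "tau s - tau 0 \<le> measure lborel {0..s} *\<^sub>R (norm C)\<^sup>2 + 2 * a * integral {0..s} tau"
      by (rule has_integral_le[OF I1 I2]) (use te' sub in auto)
    moreover have "measure lborel {0..s} *\<^sub>R (norm C)\<^sup>2 \<le> (norm C)\<^sup>2 * T" using s by (simp add: mult_left_mono mult.commute[of s])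
    moreover have "tau 0 = trace Q" by (simp add: tau_def e0)
    ultimately show ?thesis by simp
  qed
  have "tau t \<le> (trace Q + (norm C)\<^sup>2 * T) * exp (2 * a * T)"
    by (rule gronwall[OF tc _ _ ineq t]) (use a trQ T in auto)
  then show ?thesis using nt[OF t] by (simp add: Bd_def)
qed

end



lemma lip_identity:
  fixes Cm A1 A2 e1 e2 :: "real^'d^'d"
  shows "(Cm - transpose A1 ** e1 - e1 ** A1 - r *\<^sub>R (e1 ** e1)) - (Cm - transpose A2 ** e2 - e2 ** A2 - r *\<^sub>R (e2 ** e2))
    = - (transpose A1 ** (e1 - e2)) - transpose (A1 - A2) ** e2 - (e1 - e2) ** A1 - e2 ** (A1 - A2)
      - r *\<^sub>R (e1 ** (e1 - e2) + (e1 - e2) ** e2)"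
  by (simp add: vec_eq_iff matrix_matrix_mult_def transpose_def sum_subtractf sum.distrib
       algebra_simps sum_distrib_left)

lemma norm6:
  fixes P1 P2 P3 P4 S U :: "'a::real_normed_vector"
  assumes "c \<ge> 0"
  shows "norm (- P1 - P2 - P3 - P4 - c *\<^sub>R (S + U)) \<le> norm P1 + norm P2 + norm P3 + norm P4 + c * (norm S + norm U)"
proof -
  have "norm (- P1 - P2 - P3 - P4 - c *\<^sub>R (S + U)) \<le> norm (- P1 - P2 - P3 - P4) + norm (c *\<^sub>R (S + U))"
    by (rule norm_triangle_ineq4)
  also have "norm (- P1 - P2 - P3 - P4) \<le> norm P1 + norm P2 + norm P3 + norm P4"
  proof -
    have "norm (- P1 - P2 - P3 - P4) \<le> norm (- P1 - P2 - P3) + norm P4" by (rule norm_triangle_ineq4)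
    also have "norm (- P1 - P2 - P3) \<le> norm (- P1 - P2) + norm P3" by (rule norm_triangle_ineq4)
    also have "norm (- P1 - P2) \<le> norm (- P1) + norm P2" by (rule norm_triangle_ineq4)
    finally show ?thesis by simp
  qed
  also have "norm (c *\<^sub>R (S + U)) \<le> c * (norm S + norm U)"
    using assms by (simp add: mult_left_mono norm_triangle_ineq)
  finally show ?thesis by simp
qed

lemma mm_bound:
  assumes "norm (X::real^'d^'d) \<le> x" "norm (Y::real^'d^'d) \<le> y" "0 \<le> x"
  shows "norm (X ** Y) \<le> x * y"
proof -
  have "norm (X ** Y) \<le> norm X * norm Y" by (rule norm_mm_le)
  also have "\<dots> \<le> x * y" using assms by (intro mult_mono) auto
  finally show ?thesis .
qed

lemma lip_est:
  fixes e1 e2 A1 A2 :: "real \<Rightarrow> real^'d^'d" and C :: "real^'d^'m"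
  assumes T: "T > 0" and lam: "lam > 0" and a: "a \<ge> 0" and Eb: "Eb \<ge> 0"
    and Abd: "\<And>t. t \<in> {0..T} \<Longrightarrow> norm (A1 t) \<le> a"
    and Ac1: "continuous_on {0..T} A1" and Ac2: "continuous_on {0..T} A2"
    and eb: "\<And>t. t \<in> {0..T} \<Longrightarrow> norm (e1 t) \<le> Eb \<and> norm (e2 t) \<le> Eb"
    and e0: "e1 0 = e2 0"
    and de1: "\<And>t. t \<in> {0..T} \<Longrightarrow> (e1 has_vector_derivative
           (transpose C ** C - transpose (A1 t) ** e1 t - e1 t ** A1 t
            - (1 / lam) *\<^sub>R (e1 t ** e1 t))) (at t within {0..T})"
    and de2: "\<And>t. t \<in> {0..T} \<Longrightarrow> (e2 has_vector_derivative
           (transpose C ** C - transpose (A2 t) ** e2 t - e2 t ** A2 t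
            - (1 / lam) *\<^sub>R (e2 t ** e2 t))) (at t within {0..T})"
    and t: "t \<in> {0..T}"
  shows "norm (e1 t - e2 t) \<le> (2 * Eb * integral {0..T} (\<lambda>s. norm (A1 s - A2 s))) * exp ((2*a + 2*Eb/lam) * T)"
proof -
  define D where "D s = e1 s - e2 s" for s
  define k where "k = 2*a + 2*Eb/lam"
  define D' where "D' s = (transpose C ** C - transpose (A1 s) ** e1 s - e1 s ** A1 s - (1 / lam) *\<^sub>R (e1 s ** e1 s))
     - (transpose C ** C - transpose (A2 s) ** e2 s - e2 s ** A2 s - (1 / lam) *\<^sub>R (e2 s ** e2 s))" for s
  have k: "k \<ge> 0" using a Eb lam by (simp add: k_def)
  have dD: "(D has_vector_derivative D' s) (at s within {0..T})" if "s \<in> {0..T}" for s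
    unfolding D_def D'_def by (intro has_vector_derivative_diff de1 de2 that)
  have ec1: "continuous_on {0..T} e1" using de1 by (rule continuous_on_vector_derivative)
  have ec2: "continuous_on {0..T} e2" using de2 by (rule continuous_on_vector_derivative)
  have Dc: "continuous_on {0..T} (\<lambda>s. norm (D s))"
    unfolding D_def by (intro continuous_intros ec1 ec2)
  have dAc: "continuous_on {0..T} (\<lambda>s. norm (A1 s - A2 s))" by (intro continuous_intros Ac1 Ac2)
  have bd: "norm (D' s) \<le> k * norm (D s) + 2 * Eb * norm (A1 s - A2 s)" if s: "s \<in> {0..T}" for s
  proof -
    have "norm (D' s) \<le> norm (transpose (A1 s) ** D s) + norm (transpose (A1 s - A2 s) ** e2 s)
        + norm (D s ** A1 s) + norm (e2 s ** (A1 s - A2 s)) + (1/lam) * (norm (e1 s ** D s) + norm (D s ** e2 s))"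
      unfolding D'_def lip_identity D_def using lam by (intro norm6) simp
    also have "\<dots> \<le> a * norm (D s) + norm (A1 s - A2 s) * Eb + norm (D s) * a + Eb * norm (A1 s - A2 s)
        + (1/lam) * (Eb * norm (D s) + norm (D s) * Eb)"
      using Abd[OF s] eb[OF s] a Eb lam
      by (intro add_mono mult_left_mono mm_bound) (auto simp: norm_transpose_eq)
    also have "\<dots> = k * norm (D s) + 2 * Eb * norm (A1 s - A2 s)" by (simp add: k_def algebra_simps)
    finally show ?thesis .
  qed
  define c where "c = 2 * Eb * integral {0..T} (\<lambda>s. norm (A1 s - A2 s))"
  have c: "c \<ge> 0" unfolding c_def using Eb
    by (intro mult_nonneg_nonneg integral_nonneg integrable_continuous_interval dAc) auto
  have ineq: "norm (D s) \<le> c + k * integral {0..s} (\<lambda>s. norm (D s))" if s: "s \<in> {0..T}" for s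
  proof -
    have sub: "{0..s} \<subseteq> {0..T}" using s by auto
    have "norm (D s) = norm (D s - D 0)" by (simp add: D_def e0)
    also have "\<dots> \<le> integral {0..s} (\<lambda>s. k * norm (D s) + 2 * Eb * norm (A1 s - A2 s))"
      using s by (intro deriv_norm_bound[where T=T and F'=D'] dD bd continuous_intros Dc dAc) auto
    also have "\<dots> = k * integral {0..s} (\<lambda>s. norm (D s)) + 2 * Eb * integral {0..s} (\<lambda>s. norm (A1 s - A2 s))"
    proof -
      have i1: "(\<lambda>s. norm (D s)) integrable_on {0..s}"
        using continuous_on_subset[OF Dc sub] integrable_continuous_interval by blast
      have i2: "(\<lambda>s. norm (A1 s - A2 s)) integrable_on {0..s}"
        using continuous_on_subset[OF dAc sub] integrable_continuous_interval by blast
      have j1: "(\<lambda>s. k * norm (D s)) integrable_on {0..s}" using integrable_on_cmult_left[OF i1, of k] by simp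
      have j2: "(\<lambda>s. 2 * Eb * norm (A1 s - A2 s)) integrable_on {0..s}"
        using integrable_on_cmult_left[OF i2, of "2 * Eb"] by simp
      show ?thesis by (simp add: integral_add[OF j1 j2])
    qed
    also have "integral {0..s} (\<lambda>s. norm (A1 s - A2 s)) \<le> integral {0..T} (\<lambda>s. norm (A1 s - A2 s))"
      using s by (intro integral_subset_le sub integrable_continuous_interval dAc
          continuous_on_subset[OF dAc sub]) auto
    finally show ?thesis unfolding c_def using Eb by (simp add: mult_left_mono)
  qed
  have "norm (D t) \<le> c * exp (k * T)" by (rule gronwall[OF Dc k c ineq t])
  then show ?thesis by (simp add: D_def c_def k_def)
qed

lemma int_l2_bound:
  fixes f :: "real \<Rightarrow> real"
  assumes T: "T > 0" and fc: "continuous_on {0..T} f" and L: "L > 0" and d: "\<delta> > 0"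
    and I: "integral {0..T} (\<lambda>s. (f s)\<^sup>2) \<le> (L * \<delta>)\<^sup>2"
  shows "integral {0..T} f \<le> sqrt T * L * \<delta>"
proof -
  define r where "r = L * \<delta> / sqrt T"
  have r: "r > 0" using L d T by (simp add: r_def)
  have pt: "f s \<le> (1 / (2 * r)) * (f s)\<^sup>2 + r / 2" for s
  proof -
    have "0 \<le> (f s - r)\<^sup>2" by simp
    then have "2 * r * f s \<le> (f s)\<^sup>2 + r\<^sup>2" by (simp add: power2_eq_square algebra_simps)
    then show ?thesis using r by (simp add: field_simps power2_eq_square)
  qed
  have i2: "(\<lambda>s. (1 / (2 * r)) * (f s)\<^sup>2) integrable_on {0..T}"
    by (intro integrable_continuous_interval continuous_intros fc)
  have i3: "(\<lambda>s. r / 2) integrable_on {0..T}"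
    by (intro integrable_continuous_interval continuous_intros)
  have i1: "f integrable_on {0..T}" by (intro integrable_continuous_interval fc)
  have "integral {0..T} f \<le> integral {0..T} (\<lambda>s. (1 / (2 * r)) * (f s)\<^sup>2 + r / 2)"
    by (intro integral_le i1 pt integrable_add i2 i3)
  also have "\<dots> = integral {0..T} (\<lambda>s. (f s)\<^sup>2) / (2 * r) + r / 2 * T"
    unfolding integral_add[OF i2 i3] using T by simp
  also have "\<dots> \<le> (L * \<delta>)\<^sup>2 / (2 * r) + r / 2 * T"
    using I r by (simp add: divide_right_mono)
  also have "\<dots> = sqrt T * L * \<delta>"
  proof -
    have sT: "sqrt T > 0" "sqrt T * sqrt T = T" using T by auto
    show ?thesis unfolding r_def using sT L d
      by (simp add: field_simps power2_eq_square)
  qed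
  finally show ?thesis .
qed




theorem mainTheorem11:
  fixes T :: real and C :: "real^'d^'m" and Q :: "real^'d^'d"
    and \<Theta> :: "(real^'p) set"
    and A :: "real^'p \<Rightarrow> real \<Rightarrow> real^'d^'d"
    and E :: "real \<Rightarrow> real^'p \<Rightarrow> real \<Rightarrow> real^'d^'d"
  assumes T_pos: "T > 0"
    and C1: "compact \<Theta>" and Theta_ne: "\<Theta> \<noteq> {}"
    and C3: "continuous_on ({0..T} \<times> \<Theta>) (\<lambda>(t, th). A th t)"
    and A_Lip: "\<exists>L. \<forall>th\<in>\<Theta>. \<forall>th'\<in>\<Theta>.
        integral {0..T} (\<lambda>t. (norm (A th t - A th' t))\<^sup>2) \<le> (L * norm (th - th'))\<^sup>2"
    and Q_sym: "transpose Q = Q"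
    and Q_nonneg: "\<forall>x. 0 \<le> x \<bullet> (Q *v x)"
    and riccati: "\<forall>lam>0. \<forall>th\<in>\<Theta>. E lam th 0 = Q \<and>
        (\<forall>t\<in>{0..T}. (E lam th has_vector_derivative
           (transpose C ** C - transpose (A th t) ** E lam th t - E lam th t ** A th t
            - (1 / lam) *\<^sub>R (E lam th t ** E lam th t))) (at t within {0..T}))"
  shows "\<exists>K1 K2 L1. K1 > 0 \<and> K2 > 0 \<and> L1 > 0 \<and>
    (\<forall>lam>0.
      (\<forall>th\<in>\<Theta>. \<forall>th'\<in>\<Theta>. \<forall>t\<in>{0..T}.
         norm (E lam th t - E lam th' t)
           \<le> K1 * Ebar E T \<Theta> lam * exp (L1 * Ebar E T \<Theta> lam / lam) * norm (th - th'))
      \<and> Ebar E T \<Theta> lam \<le> K2 * exp (L1 / lam))"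
proof -
  obtain L where L: "\<And>th th'. th\<in>\<Theta> \<Longrightarrow> th'\<in>\<Theta> \<Longrightarrow>
        integral {0..T} (\<lambda>t. (norm (A th t - A th' t))\<^sup>2) \<le> (L * norm (th - th'))\<^sup>2"
    using A_Lip by blast
  define L' where "L' = \<bar>L\<bar> + 1"
  have L': "L' > 0" "\<bar>L\<bar> \<le> L'" by (auto simp: L'_def)
  obtain a where a: "a > 0" and abd: "\<And>t th. t \<in> {0..T} \<Longrightarrow> th \<in> \<Theta> \<Longrightarrow> norm (A th t) \<le> a"
  proof -
    have "compact ((\<lambda>(t, th). A th t) ` ({0..T} \<times> \<Theta>))"
      by (intro compact_continuous_image C3 compact_Times compact_Icc C1)
    then obtain B where "B > 0" "\<forall>x\<in>(\<lambda>(t, th). A th t) ` ({0..T} \<times> \<Theta>). norm x \<le> B"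
      using compact_imp_bounded bounded_pos by metis
    then show ?thesis using that[of B] by auto
  qed
  have Acont: "continuous_on {0..T} (A th)" if th: "th \<in> \<Theta>" for th
  proof -
    have "continuous_on {0..T} (\<lambda>t. (\<lambda>(t, th). A th t) (t, th))"
      by (rule continuous_on_compose2[OF C3]) (auto intro!: continuous_intros simp: th)
    then show ?thesis by simp
  qed
  define Bd where "Bd = (trace Q + (norm C)\<^sup>2 * T) * exp (2 * a * T)"
  have ric: "ric T lam a (A th) (E lam th) C Q" if "lam > 0" "th \<in> \<Theta>" for lam th
    unfolding ric_def using that T_pos a abd Q_sym Q_nonneg riccati by auto
  have ebd: "norm (E lam th t) \<le> Bd" if "lam > 0" "th \<in> \<Theta>" "t \<in> {0..T}" for lam th t
    using ric.ebound_uniform[OF ric[OF that(1,2)] that(3)] by (simp add: ric.Bd_def[OF ric[OF that(1,2)]] Bd_def)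
  obtain th0 where th0: "th0 \<in> \<Theta>" using Theta_ne by auto
  have Bd0: "Bd \<ge> 0" using ebd[of 1 th0 0] th0 T_pos by (meson atLeastAtMost_iff norm_ge_zero order_trans zero_less_one order_refl less_imp_le)
  define K1 where "K1 = 2 * sqrt T * L' * exp (2 * a * T)"
  have K1: "K1 > 0" using T_pos L' by (simp add: K1_def)
  have K2: "Bd + 1 > 0" using Bd0 by simp
  have L1: "2 * T > 0" using T_pos by simp
  have main: "(\<forall>th\<in>\<Theta>. \<forall>th'\<in>\<Theta>. \<forall>t\<in>{0..T}. norm (E lam th t - E lam th' t)
           \<le> K1 * Ebar E T \<Theta> lam * exp (2 * T * Ebar E T \<Theta> lam / lam) * norm (th - th'))
      \<and> Ebar E T \<Theta> lam \<le> (Bd + 1) * exp (2 * T / lam)" if lam: "lam > 0" for lam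
  proof (rule conjI[rotated])
    define Eb where "Eb = Ebar E T \<Theta> lam"
    define S where "S = {0..T} \<times> \<Theta>"
    have Sne: "S \<noteq> {}" using th0 T_pos by (auto simp: S_def)
    have bdd: "bdd_above ((\<lambda>p. norm (E lam (snd p) (fst p))) ` S)"
      by (rule bdd_aboveI[of _ Bd]) (auto simp: S_def intro: ebd[OF lam])
    have le: "norm (E lam th t) \<le> Eb" if "th \<in> \<Theta>" "t \<in> {0..T}" for th t
      unfolding Eb_def Ebar_def
      using cSUP_upper[OF _ bdd, of "(t, th)"] that by (simp add: S_def)
    have EbB: "Eb \<le> Bd"
      unfolding Eb_def Ebar_def by (rule cSUP_least) (use th0 T_pos ebd[OF lam] in auto)
    have Eb0: "Eb \<ge> 0" using le[OF th0, of 0] T_pos by (meson atLeastAtMost_iff norm_ge_zero order_trans order_refl less_imp_le)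
    show "Ebar E T \<Theta> lam \<le> (Bd + 1) * exp (2 * T / lam)"
    proof -
      have "1 \<le> exp (2 * T / lam)" using T_pos lam by simp
      then have "Bd + 1 \<le> (Bd + 1) * exp (2 * T / lam)" using Bd0
        by (metis mult.right_neutral mult_left_mono add_nonneg_nonneg zero_le_one)
      then show ?thesis using EbB Eb_def by simp
    qed
    show "\<forall>th\<in>\<Theta>. \<forall>th'\<in>\<Theta>. \<forall>t\<in>{0..T}. norm (E lam th t - E lam th' t)
           \<le> K1 * Ebar E T \<Theta> lam * exp (2 * T * Ebar E T \<Theta> lam / lam) * norm (th - th')"
    proof (intro ballI)
      fix th th' t assume th: "th \<in> \<Theta>" and th': "th' \<in> \<Theta>" and t: "t \<in> {0..T}"
      show "norm (E lam th t - E lam th' t)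
           \<le> K1 * Ebar E T \<Theta> lam * exp (2 * T * Ebar E T \<Theta> lam / lam) * norm (th - th')"
      proof (cases "th = th'")
        case True then show ?thesis by simp
      next
        case False
        define \<delta> where "\<delta> = norm (th - th')"
        have d: "\<delta> > 0" using False by (simp add: \<delta>_def)
        have est: "norm (E lam th t - E lam th' t) \<le> (2 * Eb * integral {0..T} (\<lambda>s. norm (A th s - A th' s))) * exp ((2*a + 2*Eb/lam) * T)"
          using riccati lam th th' T_pos a Eb0 abd le
          by (intro lip_est[where C=C and a=a and Eb=Eb and lam=lam, OF T_pos lam _ Eb0 _ Acont[OF th] Acont[OF th'] _ _ _ _ t])
             auto
        have I2: "integral {0..T} (\<lambda>s. (norm (A th s - A th' s))\<^sup>2) \<le> (L' * \<delta>)\<^sup>2"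
        proof -
          have "(L * \<delta>)\<^sup>2 = (\<bar>L\<bar> * \<delta>)\<^sup>2" by (simp add: power2_eq_square)
          also have "\<dots> \<le> (L' * \<delta>)\<^sup>2" using L' d by (intro power_mono mult_right_mono) auto
          finally show ?thesis using L[OF th th'] \<delta>_def by simp
        qed
        have int: "integral {0..T} (\<lambda>s. norm (A th s - A th' s)) \<le> sqrt T * L' * \<delta>"
          by (rule int_l2_bound[OF T_pos _ L'(1) d I2]) (intro continuous_intros Acont th th')
        have "(2 * Eb * integral {0..T} (\<lambda>s. norm (A th s - A th' s))) * exp ((2*a + 2*Eb/lam) * T)
            \<le> (2 * Eb * (sqrt T * L' * \<delta>)) * exp ((2*a + 2*Eb/lam) * T)"
          using int Eb0 by (intro mult_right_mono mult_left_mono) auto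
        also have "\<dots> = K1 * Eb * exp (2 * T * Eb / lam) * \<delta>"
        proof -
          have "exp ((2*a + 2*Eb/lam) * T) = exp (2 * a * T) * exp (2 * T * Eb / lam)"
            by (simp add: exp_add[symmetric] algebra_simps)
          then show ?thesis by (simp add: K1_def)
        qed
        finally show ?thesis using est by (simp add: Eb_def \<delta>_def)
      qed
    qed
  qed
  show ?thesis using K1 K2 L1 main by blast
qed



end
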